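(* Let $\beta>0$ and $k<0$. Let \[f_{+-}(x,y,z)=\beta(x^2y^2+y^2z^2+x^2z^2)+\Big(x^2+y^2+z^2-\tfrac12\Big)^2-\tfrac{1-k}{4}.\] Then the zero set $Q^{+-}(k)=\{(x,y,z)\in\mathbb{R}^3: f_{+-}(x,y,z)=0\}$ is a connected compact surface homeomorphic to a sphere.
   Context: $Q^{+-}(k)$ is an octahedral quartic, i.e. $f_{+-}$ is invariant under the group of $3\times 3$ signed permutation matrices. *)

theory Defs
  imports "HOL-Analysis.Analysis"
begin

definition f_pm :: "real \<Rightarrow> real \<Rightarrow> real ^ 3 \<Rightarrow> real" where
  "f_pm \<beta> k p = (let x = p $ 1; y = p $ 2; z = p $ 3 in
     \<beta> * (x^2 * y^2 + y^2 * z^2 + x^2 * z^2) + (x^2 + y^2 + z^2 - 1/2)^2 - (1 - k) / 4)"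

definition Q_pm :: "real \<Rightarrow> real \<Rightarrow> (real ^ 3) set" where
  "Q_pm \<beta> k = {p. f_pm \<beta> k p = 0}"

end

theory Submission
  imports Defs
begin

definition gq :: "real ^ 3 \<Rightarrow> real" where
  "gq p = (p$1)^2 * (p$2)^2 + (p$2)^2 * (p$3)^2 + (p$1)^2 * (p$3)^2"

definition Nq :: "real ^ 3 \<Rightarrow> real" where
  "Nq p = (p$1)^2 + (p$2)^2 + (p$3)^2"

lemma gq_nonneg: "gq p \<ge> 0" unfolding gq_def by simp

lemma norm_sq_Nq: "(norm p)^2 = Nq p"
  unfolding power2_norm_eq_inner by (simp add: inner_vec_def sum_3 Nq_def power2_eq_square)

lemma f_scale: "f_pm \<beta> k (c *\<^sub>R p) = \<beta> * (c^2)^2 * gq p + (c^2 * Nq p - 1/2)^2 - (1-k)/4"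
  unfolding f_pm_def gq_def Nq_def Let_def
  by (simp add: power_mult_distrib algebra_simps power2_eq_square)

lemma f_unit:
  assumes "norm u = 1"
  shows "f_pm \<beta> k (c *\<^sub>R u) = (1 + \<beta> * gq u) * (c^2)^2 - c^2 + k/4"
proof -
  have "Nq u = 1" using norm_sq_Nq[of u] assms by simp
  then show ?thesis unfolding f_scale by (simp add: field_simps power2_eq_square)
qed

definition Sr :: "real \<Rightarrow> real \<Rightarrow> real ^ 3 \<Rightarrow> real" where
  "Sr \<beta> k u = (1 + sqrt (1 - (1 + \<beta> * gq u) * k)) / (2 * (1 + \<beta> * gq u))"

lemma quad_root:
  fixes a k s :: real
  assumes a: "a \<ge> 1" and k: "k < 0"
  defines "S \<equiv> (1 + sqrt (1 - a * k)) / (2 * a)"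
  shows "S > 0" and "a * S^2 - S + k/4 = 0"
    and "s > 0 \<Longrightarrow> a * s^2 - s + k/4 = 0 \<Longrightarrow> s = S"
proof -
  define D where "D = sqrt (1 - a*k)"
  have "a*k \<le> 0" using mult_nonneg_nonpos[of a k] a k by simp
  then have "1 - a*k \<ge> 0" by linarith
  then have D2: "D^2 = 1 - a*k" unfolding D_def by (rule real_sqrt_pow2)
  have D0: "D \<ge> 0" unfolding D_def by (rule real_sqrt_ge_zero) fact
  have Seq: "S = (1 + D) / (2*a)" unfolding S_def D_def ..
  show "S > 0" unfolding Seq using a D0 by simp
  define S' where "S' = (1 - D) / (2*a)"
  have fac: "a * x^2 - x + k/4 = a * (x - S) * (x - S')" for x
  proof -
    have s1: "S + S' = 1/a" unfolding Seq S'_def using a by (simp add: field_simps)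
    have "S * S' = (1 - D^2) / (4*a^2)" unfolding Seq S'_def using a
      by (simp add: field_simps power2_eq_square)
    also have "\<dots> = k / (4*a)" unfolding D2 using a by (simp add: field_simps power2_eq_square)
    finally have s2: "S * S' = k / (4*a)" .
    have "a * (x - S) * (x - S') = a * x^2 - a * (S + S') * x + a * (S * S')"
      by (simp add: algebra_simps power2_eq_square)
    also have "\<dots> = a * x^2 - x + k/4" unfolding s1 s2 using a by simp
    finally show ?thesis by simp
  qed
  show "a * S^2 - S + k/4 = 0" using fac[of S] by simp
  have "D > 1"
  proof -
    have "D^2 > 1^2" using D2 a k by (simp add: mult_pos_neg)
    show ?thesis
    proof (rule ccontr)
      assume "\<not> 1 < D"
      then have "D \<le> 1" by linarith
      then have "D^2 \<le> 1" using D0 by (intro power_le_one)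
      then show False using \<open>D^2 > 1^2\<close> by simp
    qed
  qed
  then have "S' < 0" unfolding S'_def using a by (simp add: divide_neg_pos)
  assume "s > 0" "a * s^2 - s + k/4 = 0"
  then have "a * (s - S) * (s - S') = 0" using fac[of s] by simp
  moreover have "s - S' \<noteq> 0" using \<open>S' < 0\<close> \<open>s > 0\<close> by linarith
  moreover have "a \<noteq> 0" using a by linarith
  ultimately have "s - S = 0" by simp
  then show "s = S" by simp
qed

lemma Sr_props:
  assumes "\<beta> > 0" "k < 0"
  shows "Sr \<beta> k u > 0" "(1 + \<beta> * gq u) * (Sr \<beta> k u)^2 - Sr \<beta> k u + k/4 = 0"
    "s > 0 \<Longrightarrow> (1 + \<beta> * gq u) * s^2 - s + k/4 = 0 \<Longrightarrow> s = Sr \<beta> k u"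
proof -
  have a: "1 + \<beta> * gq u \<ge> 1" using assms gq_nonneg[of u] by simp
  show "Sr \<beta> k u > 0" unfolding Sr_def by (rule quad_root(1)[OF a assms(2)])
  show "(1 + \<beta> * gq u) * (Sr \<beta> k u)^2 - Sr \<beta> k u + k/4 = 0"
    unfolding Sr_def by (rule quad_root(2)[OF a assms(2)])
  show "s = Sr \<beta> k u" if "s > 0" "(1 + \<beta> * gq u) * s^2 - s + k/4 = 0"
    unfolding Sr_def by (rule quad_root(3)[OF a assms(2) that])
qed

lemma cont_gq: "continuous_on UNIV gq"
  unfolding gq_def by (intro continuous_intros)

lemma cont_Sr:
  assumes "\<beta> > 0"
  shows "continuous_on UNIV (Sr \<beta> k)"
proof -
  have a: "1 + \<beta> * gq u \<noteq> 0" for u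
  proof -
    have "\<beta> * gq u \<ge> 0" using assms(1) gq_nonneg[of u] by simp
    then show ?thesis by linarith
  qed
  have c1: "continuous_on UNIV (\<lambda>u. 1 + \<beta> * gq u)"
    by (intro continuous_on_add continuous_on_mult continuous_on_const cont_gq)
  have c2: "continuous_on UNIV (\<lambda>u. 1 + sqrt (1 - (1 + \<beta> * gq u) * k))"
    by (intro continuous_on_add continuous_on_const continuous_on_real_sqrt continuous_on_diff continuous_on_mult c1)
  have c3: "continuous_on UNIV (\<lambda>u. 2 * (1 + \<beta> * gq u))"
    by (intro continuous_on_mult continuous_on_const c1)
  have a2: "2 * (1 + \<beta> * gq u) \<noteq> 0" for u
    by (rule no_zero_divisors[OF _ a]) simp
  show ?thesis unfolding Sr_def[abs_def]
    by (rule continuous_on_divide[OF c2 c3]) (use a2 in blast)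
qed

theorem lemma2:
  fixes \<beta> k :: real
  assumes "\<beta> > 0" and "k < 0"
  shows "compact (Q_pm \<beta> k) \<and> connected (Q_pm \<beta> k)
         \<and> Q_pm \<beta> k homeomorphic sphere (0 :: real ^ 3) 1"
proof -
  define F where "F u = sqrt (Sr \<beta> k u) *\<^sub>R u" for u :: "real ^ 3"
  have cont: "continuous_on (sphere 0 1) F"
    unfolding F_def
    by (intro continuous_on_scaleR continuous_on_real_sqrt continuous_on_id
        continuous_on_subset[OF cont_Sr[OF assms(1)]]) simp
  have img: "F ` sphere 0 1 = Q_pm \<beta> k"
  proof
    show "F ` sphere 0 1 \<subseteq> Q_pm \<beta> k"
    proof
      fix p assume "p \<in> F ` sphere 0 1"
      then obtain u where u: "norm u = 1" "p = F u" by auto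
      have sq: "(sqrt (Sr \<beta> k u))^2 = Sr \<beta> k u" using Sr_props(1)[OF assms, of u] by simp
      have "f_pm \<beta> k (F u) = (1 + \<beta> * gq u) * ((sqrt (Sr \<beta> k u))^2)^2 - (sqrt (Sr \<beta> k u))^2 + k/4"
        unfolding F_def by (rule f_unit[OF u(1)])
      also have "\<dots> = 0" unfolding sq by (rule Sr_props(2)[OF assms])
      finally show "p \<in> Q_pm \<beta> k" unfolding Q_pm_def u(2) by simp
    qed
  next
    show "Q_pm \<beta> k \<subseteq> F ` sphere 0 1"
    proof
      fix p assume p: "p \<in> Q_pm \<beta> k"
      have "p \<noteq> 0"
      proof
        assume "p = 0"
        then show False using p assms unfolding Q_pm_def f_pm_def by (simp add: power2_eq_square)
      qed
      define u where "u = p /\<^sub>R norm p"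
      have nu: "norm u = 1" unfolding u_def using \<open>p \<noteq> 0\<close> by simp
      have pu: "p = norm p *\<^sub>R u" unfolding u_def using \<open>p \<noteq> 0\<close> by simp
      have "f_pm \<beta> k (norm p *\<^sub>R u) = 0" using p pu unfolding Q_pm_def by simp
      then have "(1 + \<beta> * gq u) * ((norm p)^2)^2 - (norm p)^2 + k/4 = 0"
        using f_unit[OF nu] by simp
      then have "(norm p)^2 = Sr \<beta> k u"
        using Sr_props(3)[OF assms] \<open>p \<noteq> 0\<close> by simp
      then have "sqrt (Sr \<beta> k u) = norm p"
        by (intro real_sqrt_unique) simp_all
      then have "p = F u" unfolding F_def using pu by simp
      then show "p \<in> F ` sphere 0 1" using nu by simp
    qed
  qed
  have inj: "inj_on F (sphere 0 1)"
  proof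
    fix u v assume u: "u \<in> sphere (0::real^3) 1" and v: "v \<in> sphere (0::real^3) 1" and e: "F u = F v"
    have su: "sqrt (Sr \<beta> k u) > 0" using Sr_props(1)[OF assms] by simp
    have sv: "sqrt (Sr \<beta> k v) > 0" using Sr_props(1)[OF assms] by simp
    have "norm (F u) = sqrt (Sr \<beta> k u)" using u su unfolding F_def by simp
    moreover have "norm (F v) = sqrt (Sr \<beta> k v)" using v sv unfolding F_def by simp
    ultimately have "sqrt (Sr \<beta> k u) = sqrt (Sr \<beta> k v)" using e by simp
    then show "u = v" using e su unfolding F_def by simp
  qed
  have h: "sphere (0::real^3) 1 homeomorphic Q_pm \<beta> k"
    using homeomorphic_compact[OF compact_sphere cont img inj] .
  have c1: "compact (F ` sphere 0 1)" by (rule compact_continuous_image[OF cont compact_sphere])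
  have "2 \<le> DIM(real^3)" by simp
  then have c2: "connected (F ` sphere 0 1)"
    by (rule connected_continuous_image[OF cont connected_sphere])
  have h2: "Q_pm \<beta> k homeomorphic sphere (0::real^3) 1" using h by (subst homeomorphic_sym)
  show ?thesis using c1 c2 h2 unfolding img by (intro conjI)
qed

end
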